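(* For all integers $q\ge1$ and $t\ge0$, $\mathsf{INDEL}_{\mathrm{det}}(q,t)\le \mathsf{DEL}_{\mathrm{det}}(q,t)=\mathsf{INS}_{\mathrm{det}}(q,t)=\mathsf{INS}_{\mathrm{cor}}(q,t).$
   Context: Let $[q]=\{0,1,\dots,q-1\}$. For $1\le m\le q$, a partial permutation of length $m$ over $[q]$ is a sequence $\pi=(\pi_1,\dots,\pi_m)$ of $m$ pairwise distinct elements of $[q]$. Let $\mathcal{S}_m^q$ be the set of those of length $m$ and $\mathcal{S}_{\mathrm{all}}^q=\bigcup_{m=1}^{q}\mathcal{S}_m^q$. A code is any subset of $\mathcal{S}_{\mathrm{all}}^q$. Juxtaposition $\omega\pi$ denotes concatenation with $\omega$ on the left. Tail deletions: for $\pi$ of length $m$ and integer $j\ge 0$, $\pi_{\downarrow j}=(\pi_{k+1},\dots,\pi_m)$ with $k=\min(j,m-1)$; $\mathcal{B}_{\mathrm{del}}^t(\pi)=\{\pi_{\downarrow j}:0\le j\le t\}$. Tail insertions: $\mathcal{B}_{\mathrm{ins}}^t(\pi)$ is the set of all $\omega\pi\in\mathcal{S}_{\mathrm{all}}^q$ with $\omega$ a (possibly empty) sequence of at most $t$ elements of $[q]$. Tail indels: $\mathcal{B}_{\mathrm{indel}}^t(\pi)$ is the set of partial permutations obtainable from $\pi$ by at most $t$ operations, each either a single tail deletion (removing the first symbol of a partial permutation of length at least $2$) or a single tail insertion (prepending an element of $[q]$ not already occurring). For $X\in\{\mathrm{del},\mathrm{ins},\mathrm{indel}\}$, a code $\mathcal{C}$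 is $t$-tail-$X$-detecting if $\mathcal{C}\cap\mathcal{B}_X^t(\pi)=\{\pi\}$ for all $\pi\in\mathcal{C}$, and $t$-tail-$X$-correcting if $\mathcal{B}_X^t(\pi_1)\cap\mathcal{B}_X^t(\pi_2)=\emptyset$ for all distinct $\pi_1,\pi_2\in\mathcal{C}$. $\mathsf{DEL}_{\mathrm{det}}(q,t)$, $\mathsf{INS}_{\mathrm{det}}(q,t)$, $\mathsf{INDEL}_{\mathrm{det}}(q,t)$ denote the maximum sizes of $t$-tail-deletion-, insertion-, indel-detecting codes in $\mathcal{S}_{\mathrm{all}}^q$, and $\mathsf{INS}_{\mathrm{cor}}(q,t)$ the maximum size of a $t$-tail-insertion-correcting code. *)

theory Defs
  imports Main
begin

text \<open>Partial permutations over [q] = {0..q-1}: nonempty lists of pairwise distinct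
  elements of {..<q} (length at most q is automatic from distinctness).
  Index 1 of the paper corresponds to the head of the list; "tail" operations
  act on the left end.\<close>

definition S_all :: "nat \<Rightarrow> nat list set" where
  "S_all q = {p. distinct p \<and> set p \<subseteq> {..<q} \<and> 1 \<le> length p}"

definition tail_del :: "nat list \<Rightarrow> nat \<Rightarrow> nat list" where
  "tail_del p j = drop (min j (length p - 1)) p"

definition B_del :: "nat \<Rightarrow> nat list \<Rightarrow> nat list set" where
  "B_del t p = {tail_del p j | j. j \<le> t}"

definition B_ins :: "nat \<Rightarrow> nat \<Rightarrow> nat list \<Rightarrow> nat list set" where
  "B_ins q t p = {w @ p | w. length w \<le> t \<and> set w \<subseteq> {..<q} \<and> w @ p \<in> S_all q}"

definition indel_step :: "nat \<Rightarrow> nat list \<Rightarrow> nat list \<Rightarrow> bool" where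
  "indel_step q s s' \<longleftrightarrow>
     (2 \<le> length s \<and> s' = tl s) \<or> (\<exists>a<q. a \<notin> set s \<and> s' = a # s)"

definition B_indel :: "nat \<Rightarrow> nat \<Rightarrow> nat list \<Rightarrow> nat list set" where
  "B_indel q t p = {s. \<exists>k\<le>t. (indel_step q ^^ k) p s}"

definition detecting :: "(nat list \<Rightarrow> nat list set) \<Rightarrow> nat list set \<Rightarrow> bool" where
  "detecting B C \<longleftrightarrow> (\<forall>p\<in>C. C \<inter> B p = {p})"

definition correcting :: "(nat list \<Rightarrow> nat list set) \<Rightarrow> nat list set \<Rightarrow> bool" where
  "correcting B C \<longleftrightarrow> (\<forall>p1\<in>C. \<forall>p2\<in>C. p1 \<noteq> p2 \<longrightarrow> B p1 \<inter> B p2 = {})"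

definition max_code :: "nat \<Rightarrow> (nat list set \<Rightarrow> bool) \<Rightarrow> nat" where
  "max_code q P = Max (card ` {C. C \<subseteq> S_all q \<and> P C})"

definition DEL_det :: "nat \<Rightarrow> nat \<Rightarrow> nat" where
  "DEL_det q t = max_code q (detecting (B_del t))"

definition INS_det :: "nat \<Rightarrow> nat \<Rightarrow> nat" where
  "INS_det q t = max_code q (detecting (B_ins q t))"

definition INDEL_det :: "nat \<Rightarrow> nat \<Rightarrow> nat" where
  "INDEL_det q t = max_code q (detecting (B_indel q t))"

definition INS_cor :: "nat \<Rightarrow> nat \<Rightarrow> nat" where
  "INS_cor q t = max_code q (correcting (B_ins q t))"

end

theory Submission
  imports Defs
begin

lemma finite_S_all: "finite (S_all q)"
proof -
  have "S_all q \<subseteq> {xs. set xs \<subseteq> {..<q} \<and> length xs \<le> q}"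
  proof
    fix p assume "p \<in> S_all q"
    then have d: "distinct p" and s: "set p \<subseteq> {..<q}" unfolding S_all_def by auto
    have "length p = card (set p)" using d by (simp add: distinct_card)
    also have "\<dots> \<le> card {..<q}" using s by (intro card_mono) auto
    finally show "p \<in> {xs. set xs \<subseteq> {..<q} \<and> length xs \<le> q}" using s by simp
  qed
  moreover have "finite {xs. set xs \<subseteq> {..<q} \<and> length xs \<le> q}"
    by (rule finite_lists_length_le) simp
  ultimately show ?thesis by (rule finite_subset)
qed

lemma B_del_char:
  assumes "p \<in> S_all q"
  shows "x \<in> B_del t p \<longleftrightarrow> (\<exists>i\<le>t. i < length p \<and> x = drop i p)"
proof
  assume "x \<in> B_del t p"
  then obtain j where "j \<le> t" "x = drop (min j (length p - 1)) p"
    unfolding B_del_def tail_del_def by auto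
  moreover have "length p \<ge> 1" using assms unfolding S_all_def by auto
  ultimately show "\<exists>i\<le>t. i < length p \<and> x = drop i p"
    by (intro exI[of _ "min j (length p - 1)"]) auto
next
  assume "\<exists>i\<le>t. i < length p \<and> x = drop i p"
  then obtain i where "i \<le> t" "i < length p" "x = drop i p" by auto
  then show "x \<in> B_del t p" unfolding B_del_def tail_del_def
    by (auto intro!: exI[of _ i])
qed

lemma suffix_S_all:
  assumes "w @ p \<in> S_all q" "p \<noteq> []"
  shows "p \<in> S_all q"
  using assms unfolding S_all_def by (cases p) auto

lemma det_del_iff:
  assumes "C \<subseteq> S_all q"
  shows "detecting (B_del t) C \<longleftrightarrow>
    (\<forall>p\<in>C. \<forall>p'\<in>C. \<forall>w. p' = w @ p \<and> length w \<le> t \<longrightarrow> p' = p)"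
proof -
  have ne: "p \<noteq> []" if "p \<in> C" for p using assms that unfolding S_all_def by auto
  have "detecting (B_del t) C \<longleftrightarrow>
     (\<forall>p\<in>C. \<forall>p'\<in>C. (\<exists>i\<le>t. i < length p \<and> p' = drop i p) \<longrightarrow> p' = p)"
  proof -
    have "C \<inter> B_del t p = {p} \<longleftrightarrow> (\<forall>p'\<in>C. (\<exists>i\<le>t. i < length p \<and> p' = drop i p) \<longrightarrow> p' = p)"
      if "p \<in> C" for p
    proof -
      have pS: "p \<in> S_all q" using that assms by auto
      have "p \<in> B_del t p" using B_del_char[OF pS] ne[OF that] by (auto intro!: exI[of _ 0])
      then show ?thesis using B_del_char[OF pS] that by blast
    qed
    then show ?thesis unfolding detecting_def by simp
  qed
  also have "\<dots> \<longleftrightarrow> (\<forall>p\<in>C. \<forall>p'\<in>C. \<forall>w. p' = w @ p \<and> length w \<le> t \<longrightarrow> p' = p)"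
  proof (intro iffI ballI allI impI)
    fix p p' w
    assume H: "\<forall>p\<in>C. \<forall>p'\<in>C. (\<exists>i\<le>t. i < length p \<and> p' = drop i p) \<longrightarrow> p' = p"
      and "p \<in> C" "p' \<in> C" "p' = w @ p \<and> length w \<le> t"
    moreover have "length w < length (w @ p)" using ne[OF \<open>p \<in> C\<close>] by simp
    ultimately have "p = w @ p" using H[rule_format, of "w @ p" p]
      by (metis append_eq_conv_conj)
    then show "p' = p" using \<open>p' = w @ p \<and> length w \<le> t\<close> by simp
  next
    fix p p'
    assume H: "\<forall>p\<in>C. \<forall>p'\<in>C. \<forall>w. p' = w @ p \<and> length w \<le> t \<longrightarrow> p' = p"
      and "p \<in> C" "p' \<in> C" "\<exists>i\<le>t. i < length p \<and> p' = drop i p"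
    then obtain i where i: "i \<le> t" "i < length p" "p' = drop i p" by blast
    have "p = take i p @ p'" using i by simp
    moreover have "length (take i p) \<le> t" using i by simp
    ultimately have "p = p'" using H \<open>p \<in> C\<close> \<open>p' \<in> C\<close> by blast
    then show "p' = p" by simp
  qed
  finally show ?thesis .
qed

lemma B_ins_char:
  assumes "p \<in> S_all q"
  shows "x \<in> B_ins q t p \<longleftrightarrow> (\<exists>w. length w \<le> t \<and> x = w @ p \<and> x \<in> S_all q)"
  unfolding B_ins_def S_all_def by auto

lemma det_ins_iff:
  assumes "C \<subseteq> S_all q"
  shows "detecting (B_ins q t) C \<longleftrightarrow>
    (\<forall>p\<in>C. \<forall>p'\<in>C. \<forall>w. p' = w @ p \<and> length w \<le> t \<longrightarrow> p' = p)"
proof -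
  have "C \<inter> B_ins q t p = {p} \<longleftrightarrow> (\<forall>p'\<in>C. \<forall>w. p' = w @ p \<and> length w \<le> t \<longrightarrow> p' = p)"
    if "p \<in> C" for p
  proof -
    have pS: "p \<in> S_all q" using that assms by auto
    have "p \<in> B_ins q t p" using B_ins_char[OF pS] pS by (auto intro!: exI[of _ "[]"])
    moreover have "p' \<in> S_all q" if "p' \<in> C" for p' using that assms by auto
    ultimately show ?thesis using B_ins_char[OF pS] that by blast
  qed
  then show ?thesis unfolding detecting_def by simp
qed

lemma cor_ins_iff:
  assumes "C \<subseteq> S_all q"
  shows "correcting (B_ins q t) C \<longleftrightarrow>
    (\<forall>p\<in>C. \<forall>p'\<in>C. \<forall>w. p' = w @ p \<and> length w \<le> t \<longrightarrow> p' = p)"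
proof
  assume H: "correcting (B_ins q t) C"
  show "\<forall>p\<in>C. \<forall>p'\<in>C. \<forall>w. p' = w @ p \<and> length w \<le> t \<longrightarrow> p' = p"
  proof (intro ballI allI impI, rule ccontr)
    fix p p' w assume "p \<in> C" "p' \<in> C" "p' = w @ p \<and> length w \<le> t" "p' \<noteq> p"
    moreover have pS: "p \<in> S_all q" "p' \<in> S_all q" using calculation assms by auto
    moreover have "p' \<in> B_ins q t p" using B_ins_char[OF pS(1)] calculation by blast
    moreover have "p' \<in> B_ins q t p'" using B_ins_char[OF pS(2)] pS by (auto intro!: exI[of _ "[]"])
    ultimately show False using H unfolding correcting_def by blast
  qed
next
  assume H: "\<forall>p\<in>C. \<forall>p'\<in>C. \<forall>w. p' = w @ p \<and> length w \<le> t \<longrightarrow> p' = p"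
  show "correcting (B_ins q t) C" unfolding correcting_def
  proof (intro ballI impI)
    fix p1 p2 assume "p1 \<in> C" "p2 \<in> C" "p1 \<noteq> p2"
    show "B_ins q t p1 \<inter> B_ins q t p2 = {}"
    proof (rule ccontr)
      assume "B_ins q t p1 \<inter> B_ins q t p2 \<noteq> {}"
      then obtain w1 w2 where e: "w1 @ p1 = w2 @ p2" "length w1 \<le> t" "length w2 \<le> t"
        unfolding B_ins_def by auto
      show False
      proof (cases "length w1 \<le> length w2")
        case True
        have "p1 = drop (length w1) (w1 @ p1)" by simp
        also have "\<dots> = drop (length w1) (w2 @ p2)" using e(1) by simp
        also have "\<dots> = drop (length w1) w2 @ p2" using True by simp
        finally have "p1 = drop (length w1) w2 @ p2" .
        moreover have "length (drop (length w1) w2) \<le> t" using e(3) by simp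
        ultimately have "p1 = p2" using H \<open>p1 \<in> C\<close> \<open>p2 \<in> C\<close> by blast
        then show False using \<open>p1 \<noteq> p2\<close> by simp
      next
        case False
        have "p2 = drop (length w2) (w2 @ p2)" by simp
        also have "\<dots> = drop (length w2) (w1 @ p1)" using e(1) by simp
        also have "\<dots> = drop (length w2) w1 @ p1" using False by simp
        finally have "p2 = drop (length w2) w1 @ p1" .
        moreover have "length (drop (length w2) w1) \<le> t" using e(2) by simp
        ultimately have "p2 = p1" using H \<open>p1 \<in> C\<close> \<open>p2 \<in> C\<close> by blast
        then show False using \<open>p1 \<noteq> p2\<close> by simp
      qed
    qed
  qed
qed

lemma del_sub_indel: "B_del t p \<subseteq> B_indel q t p"
proof
  fix x assume "x \<in> B_del t p"
  then obtain j where j: "j \<le> t" "x = drop (min j (length p - 1)) p"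
    unfolding B_del_def tail_del_def by auto
  have "(indel_step q ^^ i) p (drop i p)" if "i \<le> length p - 1" for i
    using that
  proof (induction i)
    case 0 then show ?case by simp
  next
    case (Suc i)
    then have "(indel_step q ^^ i) p (drop i p)" by simp
    moreover have "indel_step q (drop i p) (drop (Suc i) p)"
    proof -
      have "tl (drop i p) = drop (Suc i) p" by (simp add: drop_Suc drop_tl)
      moreover have "2 \<le> length (drop i p)" using Suc.prems by simp
      ultimately show ?thesis unfolding indel_step_def by simp
    qed
    ultimately show ?case by auto
  qed
  then show "x \<in> B_indel q t p" unfolding B_indel_def using j
    by (auto intro!: exI[of _ "min j (length p - 1)"])
qed

theorem mainTheorem3:
  fixes q t :: nat
  assumes "1 \<le> q"
  shows "INDEL_det q t \<le> DEL_det q t \<and> DEL_det q t = INS_det q t \<and> INS_det q t = INS_cor q t"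
proof -
  have fin: "finite (card ` {C. C \<subseteq> S_all q \<and> P C})" for P
  proof -
    have "{C. C \<subseteq> S_all q \<and> P C} \<subseteq> Pow (S_all q)" by blast
    then have "finite {C. C \<subseteq> S_all q \<and> P C}" using finite_S_all by (meson finite_Pow_iff finite_subset)
    then show ?thesis by blast
  qed
  have e1: "{C. C \<subseteq> S_all q \<and> detecting (B_del t) C} = {C. C \<subseteq> S_all q \<and> detecting (B_ins q t) C}"
    by (intro Collect_cong conj_cong refl) (simp add: det_del_iff det_ins_iff)
  have e2: "{C. C \<subseteq> S_all q \<and> correcting (B_ins q t) C} = {C. C \<subseteq> S_all q \<and> detecting (B_ins q t) C}"
    by (intro Collect_cong conj_cong refl) (simp add: cor_ins_iff det_ins_iff)
  have sub: "{C. C \<subseteq> S_all q \<and> detecting (B_indel q t) C} \<subseteq> {C. C \<subseteq> S_all q \<and> detecting (B_del t) C}"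
  proof safe
    fix C assume "C \<subseteq> S_all q" "detecting (B_indel q t) C"
    show "detecting (B_del t) C" unfolding detecting_def
    proof
      fix p assume "p \<in> C"
      then have pS: "p \<in> S_all q" using \<open>C \<subseteq> S_all q\<close> by auto
      then have "p \<noteq> []" unfolding S_all_def by auto
      then have "p \<in> B_del t p" using B_del_char[OF pS] by (auto intro!: exI[of _ 0])
      moreover have "C \<inter> B_indel q t p = {p}"
        using \<open>detecting (B_indel q t) C\<close> \<open>p \<in> C\<close> unfolding detecting_def by blast
      moreover have "B_del t p \<subseteq> B_indel q t p" by (rule del_sub_indel)
      ultimately show "C \<inter> B_del t p = {p}" using \<open>p \<in> C\<close> by blast
    qed
  qed
  have ne: "{} \<in> {C. C \<subseteq> S_all q \<and> detecting (B_indel q t) C}" by (simp add: detecting_def)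
  have "INDEL_det q t \<le> DEL_det q t" unfolding INDEL_det_def DEL_det_def max_code_def
  proof (rule Max_mono)
    show "card ` {C. C \<subseteq> S_all q \<and> detecting (B_indel q t) C}
      \<subseteq> card ` {C. C \<subseteq> S_all q \<and> detecting (B_del t) C}" using sub by (rule image_mono)
    show "card ` {C. C \<subseteq> S_all q \<and> detecting (B_indel q t) C} \<noteq> {}" using ne by blast
    show "finite (card ` {C. C \<subseteq> S_all q \<and> detecting (B_del t) C})" by (rule fin)
  qed
  then show ?thesis unfolding DEL_det_def INS_det_def INS_cor_def max_code_def e1 e2 by simp
qed

end
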